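(* For all integers $n\ge1$ and $r\ge1$: (a) $\displaystyle\sum_{k=1}^{n}(2^k-1)\,\omega(n-k)=\sum_{\substack{m+k=n\\ m\ge1,\ k\ge0}}\Phi(m)\,\Omega_m(k)$; (b) $\displaystyle\sum_{k=1}^{n}\binom{k}{r}\omega(n-k)=\sum_{\substack{m+k=n\\ m\ge1,\ k\ge0}}\Phi_r(m)\,\Omega_m(k)$.
   Context: $\Phi(n)$ is the number of nonempty subsets $A\subseteq\{1,2,\dots,n\}$ with $\gcd(\gcd(A),n)=1$, and $\Phi_r(n)$ is the number of such subsets of cardinality $r$. $\omega:\mathbb{Z}\to\mathbb{Z}$ is defined by $\omega(0)=1$; $\omega(m)=(-1)^j$ if $m=\frac{3j^2\pm j}{2}$ for some integer $j\ge1$; $\omega(m)=0$ otherwise (in particular for $m<0$). For $m\ge1$ and integer $k$, $\Omega_m(k)=\sum_{j\ge0}\omega(k-jm)=\omega(k)+\omega(k-m)+\omega(k-2m)+\cdots$. *)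

theory Defs
  imports Main
begin

definition Phi :: "nat \<Rightarrow> nat" where
  "Phi n = card {A. A \<subseteq> {1..n} \<and> A \<noteq> {} \<and> gcd (Gcd A) n = 1}"

definition Phi_r :: "nat \<Rightarrow> nat \<Rightarrow> nat" where
  "Phi_r r n = card {A. A \<subseteq> {1..n} \<and> A \<noteq> {} \<and> gcd (Gcd A) n = 1 \<and> card A = r}"

text \<open>Pentagonal-number coefficient omega (generalized pentagonal numbers (3j^2 +- j)/2, j >= 1,
  are pairwise distinct, so the j is unique).\<close>
definition omega :: "int \<Rightarrow> int" where
  "omega m = (if m = 0 then 1
     else if (\<exists>j::int. j \<ge> 1 \<and> (2 * m = 3 * j^2 + j \<or> 2 * m = 3 * j^2 - j))
     then (-1) ^ nat (THE j::int. j \<ge> 1 \<and> (2 * m = 3 * j^2 + j \<or> 2 * m = 3 * j^2 - j))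
     else 0)"

text \<open>Omega_m(k) = sum_{j >= 0} omega(k - j m). Terms with j m > k vanish (negative argument),
  so the sum is taken over j = 0 .. (nat k) div m.\<close>
definition Omega :: "nat \<Rightarrow> int \<Rightarrow> int" where
  "Omega m k = (\<Sum>j\<in>{0..nat k div m}. omega (k - int j * int m))"

end

theory Submission
  imports Defs
begin

definition TT :: "(nat \<Rightarrow> bool) \<Rightarrow> nat \<Rightarrow> nat set set" where
  "TT Q k = {A. A \<subseteq> {1..k} \<and> A \<noteq> {} \<and> Q (card A)}"

definition GG :: "(nat \<Rightarrow> bool) \<Rightarrow> nat \<Rightarrow> nat set set" where
  "GG Q m = {A. A \<subseteq> {1..m} \<and> A \<noteq> {} \<and> gcd (Gcd A) m = 1 \<and> Q (card A)}"

lemma piece: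
  fixes k m :: nat
  assumes "k \<ge> 1" "m dvd k" "m \<ge> 1"
  shows "card {A \<in> TT Q k. k div gcd (Gcd A) k = m} = card (GG Q m)"
proof -
  define d where "d = k div m"
  have dm: "d * m = k" using assms d_def by simp
  have d1: "d \<ge> 1" using dm assms by (metis less_one mult_is_0 not_le zero_less_iff_neq_zero)
  have injd: "inj ((*) d)" using d1 by (intro injI) simp
  have "bij_betw (\<lambda>B. (*) d ` B) (GG Q m) {A \<in> TT Q k. k div gcd (Gcd A) k = m}"
  proof (rule bij_betw_imageI)
    show "inj_on (\<lambda>B. (*) d ` B) (GG Q m)"
      using injd by (auto simp: inj_on_def inj_image_eq_iff)
    show "(\<lambda>B. (*) d ` B) ` GG Q m = {A \<in> TT Q k. k div gcd (Gcd A) k = m}"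
    proof (intro equalityI subsetI)
      fix A assume "A \<in> (\<lambda>B. (*) d ` B) ` GG Q m"
      then obtain B where B: "B \<in> GG Q m" and AB: "A = (*) d ` B" by blast
      have sub: "A \<subseteq> {1..k}"
      proof
        fix a assume "a \<in> A"
        then obtain b where "b \<in> B" "a = d * b" using AB by blast
        then have "1 \<le> b" "b \<le> m" using B by (auto simp: GG_def)
        then show "a \<in> {1..k}" using \<open>a = d*b\<close> d1 dm
          by (auto intro: mult_le_mono simp: Suc_le_eq)
      qed
      have cA: "card A = card B" using AB injd by (simp add: card_image inj_on_subset)
      have gA: "Gcd A = d * Gcd B" using AB Gcd_mult[of d B] by simp
      have g1: "gcd (Gcd B) m = 1" using B by (simp add: GG_def)
      have "gcd (Gcd A) k = gcd (d * Gcd B) (d * m)" using gA dm by simp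
      also have "\<dots> = d * gcd (Gcd B) m" by (rule gcd_mult_distrib_nat[symmetric])
      finally have "gcd (Gcd A) k = d" using g1 by simp
      then show "A \<in> {A \<in> TT Q k. k div gcd (Gcd A) k = m}"
        using sub cA B AB d1 dm by (auto simp: TT_def GG_def)
    next
      fix A assume A: "A \<in> {A \<in> TT Q k. k div gcd (Gcd A) k = m}"
      define g where "g = gcd (Gcd A) k"
      have "g dvd k" by (simp add: g_def)
      have "k div g = m" using A g_def by simp
      then have "g * m = k" using \<open>g dvd k\<close> by (metis dvd_mult_div_cancel)
      then have "g * m = d * m" using dm by simp
      then have gd: "g = d" using assms(3) by simp
      have dvdA: "\<And>a. a \<in> A \<Longrightarrow> d dvd a"
        proof -
        fix a assume "a \<in> A"
        then have "Gcd A dvd a" by (rule Gcd_dvd)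
        moreover have "g dvd Gcd A" unfolding g_def by (rule gcd_dvd1)
        ultimately show "d dvd a" using gd by (metis dvd_trans)
      qed
      define B where "B = (\<lambda>a. a div d) ` A"
      have AB: "A = (*) d ` B"
      proof -
        have "(*) d ` B = (\<lambda>a. d * (a div d)) ` A" unfolding B_def image_image by simp
        also have "\<dots> = (\<lambda>a. a) ` A"
          by (rule image_cong) (auto dest: dvdA)
        finally show ?thesis by simp
      qed
      have Bsub: "B \<subseteq> {1..m}"
      proof
        fix b assume "b \<in> B"
        then obtain a where a: "a \<in> A" "b = a div d" using B_def by blast
        then have a1: "1 \<le> a" "a \<le> k" using A by (auto simp: TT_def)
        have "d dvd a" using dvdA a by blast
        then obtain c where c: "a = d * c" by blast
        have "c \<noteq> 0" using c a1 by auto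
        moreover have "d * c \<le> d * m" using c a1 dm by simp
        then have "c \<le> m" using d1 by simp
        moreover have "b = c" using a c d1 by simp
        ultimately show "b \<in> {1..m}" by simp
      qed
      have cA: "card A = card B" using AB injd by (simp add: card_image inj_on_subset)
      have gA: "Gcd A = d * Gcd B" using AB Gcd_mult[of d B] by simp
      have "d * gcd (Gcd B) m = gcd (d * Gcd B) (d * m)" by (rule gcd_mult_distrib_nat)
      also have "\<dots> = d" using gd g_def gA dm by simp
      finally have "d * gcd (Gcd B) m = d" .
      then have "gcd (Gcd B) m = 1" using d1 by simp
      then have "B \<in> GG Q m" using Bsub cA A AB by (auto simp: GG_def TT_def)
      then show "A \<in> (\<lambda>B. (*) d ` B) ` GG Q m" using AB by blast
    qed
  qed
  then show ?thesis by (simp add: bij_betw_same_card)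
qed


lemma finite_TT: "finite (TT Q k)"
  by (rule finite_subset[of _ "Pow {1..k}"]) (auto simp: TT_def)

lemma card_TT:
  assumes "k \<ge> 1"
  shows "card (TT Q k) = (\<Sum>m\<in>{m\<in>{1..k}. m dvd k}. card (GG Q m))"
proof -
  let ?g = "\<lambda>A. k div gcd (Gcd A) k"
  have img: "?g ` TT Q k \<subseteq> {m\<in>{1..k}. m dvd k}"
  proof
    fix x assume "x \<in> ?g ` TT Q k"
    then obtain A where x: "x = ?g A" by blast
    define g where "g = gcd (Gcd A) k"
    have gpos: "g > 0" using assms g_def by simp
    have gk: "g dvd k" using g_def by simp
    have "k = g * x" using x gk g_def by simp
    then have "x dvd k" "x \<noteq> 0" using assms by auto
    moreover have "x \<le> k" using x by simp
    ultimately show "x \<in> {m\<in>{1..k}. m dvd k}" by simp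
  qed
  have "card (TT Q k) = (\<Sum>A\<in>TT Q k. 1)" by simp
  also have "\<dots> = (\<Sum>m\<in>{m\<in>{1..k}. m dvd k}. \<Sum>A\<in>{A\<in>TT Q k. ?g A = m}. 1)"
    by (rule sum.group[symmetric]) (use finite_TT img in auto)
  also have "\<dots> = (\<Sum>m\<in>{m\<in>{1..k}. m dvd k}. card (GG Q m))"
  proof (rule sum.cong[OF refl])
    fix m assume "m \<in> {m\<in>{1..k}. m dvd k}"
    then show "(\<Sum>A\<in>{A\<in>TT Q k. ?g A = m}. 1) = card (GG Q m)"
      using piece[of k m Q] assms by simp
  qed
  finally show ?thesis .
qed

lemma TT_all: "card (TT (\<lambda>_. True) k) = 2 ^ k - 1"
proof -
  have "TT (\<lambda>_. True) k = Pow {1..k} - {{}}" by (auto simp: TT_def)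
  then show ?thesis by (simp add: card_Pow)
qed

lemma TT_r:
  assumes "r \<ge> 1"
  shows "card (TT (\<lambda>c. c = r) k) = k choose r"
proof -
  have "TT (\<lambda>c. c = r) k = {B. B \<subseteq> {1..k} \<and> card B = r}"
    using assms by (auto simp: TT_def)
  then show ?thesis by (simp add: n_subsets)
qed

lemma Phi_GG: "Phi m = card (GG (\<lambda>_. True) m)"
  by (simp add: Phi_def GG_def)

lemma Phi_r_GG: "Phi_r r m = card (GG (\<lambda>c. c = r) m)"
  unfolding Phi_r_def GG_def by (rule arg_cong[where f=card]) auto

lemma inner_reindex:
  fixes g :: "int \<Rightarrow> int" and m n :: nat
  assumes m: "m \<in> {1..n}"
  shows "(\<Sum>k\<in>{k\<in>{1..n}. m dvd k}. g (int n - int k))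
       = (\<Sum>j\<in>{0..nat (int n - int m) div m}. g (int n - int m - int j * int m))"
proof -
  have m0: "m > 0" and mn: "m \<le> n" using m by auto
  have nn: "nat (int n - int m) = n - m" using mn by simp
  show ?thesis unfolding nn
  proof (rule sum.reindex_bij_witness[where i = "\<lambda>a. (a + 1) * m" and j = "\<lambda>b. b div m - 1"])
    fix a assume a: "a \<in> {0..(n - m) div m}"
    show "(a + 1) * m div m - 1 = a" using m0 by simp
    have "a * m \<le> n - m" using a m0 less_eq_div_iff_mult_less_eq by auto
    then have "(a + 1) * m \<le> n" using mn by simp
    moreover have "(a+1) * m \<ge> 1" using m0 by simp
    ultimately show "(a + 1) * m \<in> {k\<in>{1..n}. m dvd k}" by simp
  next
    fix b assume b: "b \<in> {k\<in>{1..n}. m dvd k}"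
    then obtain c where c: "b = m * c" by auto
    have "c \<ge> 1" using b c by (cases c) auto
    then show "(b div m - 1 + 1) * m = b" using c m0 by simp
    have "(c - 1) * m \<le> n - m" using b c \<open>c \<ge> 1\<close> by (simp add: algebra_simps diff_mult_distrib diff_le_mono)
    then have "c - 1 \<le> (n - m) div m" using m0 less_eq_div_iff_mult_less_eq by auto
    then show "b div m - 1 \<in> {0..(n - m) div m}" using c m0 by simp
    have "int n - int m - int (b div m - 1) * int m = int n - int b"
      using c m0 \<open>c \<ge> 1\<close> by (simp add: of_nat_diff algebra_simps)
    then show "g (int n - int m - int (b div m - 1) * int m) = g (int n - int b)" by (rule arg_cong)
  qed
qed

lemma main_sum:
  fixes F P :: "nat \<Rightarrow> int" and g :: "int \<Rightarrow> int" and n :: nat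
  assumes F: "\<And>k. k \<in> {1..n} \<Longrightarrow> F k = (\<Sum>m\<in>{m\<in>{1..k}. m dvd k}. P m)"
  shows "(\<Sum>k=1..n. F k * g (int n - int k))
       = (\<Sum>m=1..n. P m * (\<Sum>j\<in>{0..nat (int n - int m) div m}. g (int n - int m - int j * int m)))"
proof -
  have "(\<Sum>k=1..n. F k * g (int n - int k))
      = (\<Sum>k\<in>{1..n}. \<Sum>m\<in>{m\<in>{1..n}. m dvd k}. P m * g (int n - int k))"
  proof (rule sum.cong[OF refl])
    fix k assume k: "k \<in> {1..n}"
    have "{m\<in>{1..k}. m dvd k} = {m\<in>{1..n}. m dvd k}" using k
      by (auto dest: dvd_imp_le)
    then show "F k * g (int n - int k) = (\<Sum>m\<in>{m\<in>{1..n}. m dvd k}. P m * g (int n - int k))"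
      using F[OF k] by (simp add: sum_distrib_right)
  qed
  also have "\<dots> = (\<Sum>m\<in>{1..n}. \<Sum>k\<in>{k\<in>{1..n}. m dvd k}. P m * g (int n - int k))"
    by (rule sum.swap_restrict) auto
  also have "\<dots> = (\<Sum>m=1..n. P m * (\<Sum>j\<in>{0..nat (int n - int m) div m}. g (int n - int m - int j * int m)))"
  proof (rule sum.cong[OF refl])
    fix m assume m: "m \<in> {1..n}"
    show "(\<Sum>k\<in>{k\<in>{1..n}. m dvd k}. P m * g (int n - int k))
        = P m * (\<Sum>j\<in>{0..nat (int n - int m) div m}. g (int n - int m - int j * int m))"
      by (simp only: sum_distrib_left[symmetric] inner_reindex[OF m])
  qed
  finally show ?thesis .
qed

theorem mainTheorem13:
  fixes n r :: nat
  assumes "n \<ge> 1" and "r \<ge> 1"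
  shows "(\<Sum>k=1..n. ((2::int)^k - 1) * omega (int n - int k))
           = (\<Sum>m=1..n. int (Phi m) * Omega m (int n - int m))
       \<and> (\<Sum>k=1..n. int (k choose r) * omega (int n - int k))
           = (\<Sum>m=1..n. int (Phi_r r m) * Omega m (int n - int m))"
proof
  show "(\<Sum>k=1..n. ((2::int)^k - 1) * omega (int n - int k))
           = (\<Sum>m=1..n. int (Phi m) * Omega m (int n - int m))"
    unfolding Omega_def
  proof (rule main_sum)
    fix k :: nat assume k: "k \<in> {1..n}"
    have "(2::int)^k - 1 = int (2^k - 1)" by (simp add: of_nat_diff)
    also have "\<dots> = int (card (TT (\<lambda>_. True) k))" by (simp add: TT_all)
    also have "\<dots> = (\<Sum>m\<in>{m\<in>{1..k}. m dvd k}. int (Phi m))"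
      using card_TT[of k] k by (simp add: Phi_GG)
    finally show "(2::int)^k - 1 = (\<Sum>m\<in>{m\<in>{1..k}. m dvd k}. int (Phi m))" .
  qed
  show "(\<Sum>k=1..n. int (k choose r) * omega (int n - int k))
           = (\<Sum>m=1..n. int (Phi_r r m) * Omega m (int n - int m))"
    unfolding Omega_def
  proof (rule main_sum)
    fix k :: nat assume k: "k \<in> {1..n}"
    have "int (k choose r) = int (card (TT (\<lambda>c. c = r) k))" using assms by (simp add: TT_r)
    also have "\<dots> = (\<Sum>m\<in>{m\<in>{1..k}. m dvd k}. int (Phi_r r m))"
      using card_TT[of k] k by (simp add: Phi_r_GG)
    finally show "int (k choose r) = (\<Sum>m\<in>{m\<in>{1..k}. m dvd k}. int (Phi_r r m))" .
  qed
qed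

end
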